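(* Let $\mathbf{S}$ be a real symmetric positive semidefinite $p\times p$ matrix, $\lambda_{\mathrm{II}}>0$ and $\lambda_a=\lambda_{\mathrm{II}}^2$. With $\hat{\mathbf{\Omega}}^{\mathrm{II}}(\lambda_{\mathrm{II}})=(\mathbf{S}+\lambda_{\mathrm{II}}\mathbf{I}_p)^{-1}$, $\hat{\mathbf{\Omega}}^{\mathrm{II}a}(\lambda_a)=\{[\lambda_a\mathbf{I}_p+\frac14\mathbf{S}^2]^{1/2}+\frac12\mathbf{S}\}^{-1}$ and $\mathcal{L}(\mathbf{\Omega};\mathbf{S})=\ln|\mathbf{\Omega}|-\mathrm{tr}(\mathbf{S}\mathbf{\Omega})$, one has $$\mathcal{L}[\hat{\mathbf{\Omega}}^{\mathrm{II}}(\lambda_{\mathrm{II}});\mathbf{S}]\le\mathcal{L}[\hat{\mathbf{\Omega}}^{\mathrm{II}a}(\lambda_a);\mathbf{S}].$$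
   Context: $|\cdot|$ is the determinant; $\mathbf{H}^{1/2}$ denotes the unique symmetric positive definite square root of a symmetric positive definite $\mathbf{H}$. *)

theory Defs
  imports "HOL-Analysis.Analysis"
begin

definition symmetric_mat :: "real^'n^'n \<Rightarrow> bool" where
  "symmetric_mat A \<longleftrightarrow> transpose A = A"

definition psd_mat :: "real^'n^'n \<Rightarrow> bool" where
  "psd_mat A \<longleftrightarrow> symmetric_mat A \<and> (\<forall>x. 0 \<le> x \<bullet> (A *v x))"

definition pd_mat :: "real^'n^'n \<Rightarrow> bool" where
  "pd_mat A \<longleftrightarrow> symmetric_mat A \<and> (\<forall>x. x \<noteq> 0 \<longrightarrow> 0 < x \<bullet> (A *v x))"

definition mat_sqrt :: "real^'n^'n \<Rightarrow> real^'n^'n" where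
  "mat_sqrt H = (THE R. pd_mat R \<and> R ** R = H)"

definition loglik :: "real^'n^'n \<Rightarrow> real^'n^'n \<Rightarrow> real" where
  "loglik \<Omega> S = ln (det \<Omega>) - trace (S ** \<Omega>)"

end

theory Submission
  imports Defs
begin


lemma sym_inner:
  fixes S :: "real^'n^'n"
  assumes "transpose S = S"
  shows "x \<bullet> (S *v y) = (S *v x) \<bullet> y"
  by (metis assms dot_lmul_matrix transpose_matrix_vector)

lemma eig_set:
  fixes S :: "real^'n^'n"
  assumes sym: "transpose S = S"
  shows "k \<le> CARD('n) \<Longrightarrow> \<exists>B. finite B \<and> card B = k \<and> (\<forall>b\<in>B. norm b = 1 \<and> (\<exists>\<mu>. S *v b = \<mu> *\<^sub>R b)) \<and> pairwise orthogonal B"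
proof (induction k)
  case 0
  then show ?case by (intro exI[of _ "{}"]) auto
next
  case (Suc k)
  then obtain B where B: "finite B" "card B = k" "\<forall>b\<in>B. norm b = 1 \<and> (\<exists>\<mu>. S *v b = \<mu> *\<^sub>R b)" "pairwise orthogonal B"
    by auto
  have "dim B \<le> card B" using B(1) by (simp add: dim_le_card span_superset)
  then have "dim B < DIM(real^'n)" using Suc.prems B(2) by simp
  then obtain z where z: "z \<noteq> 0" "\<And>y. y \<in> span B \<Longrightarrow> orthogonal z y"
    using orthogonal_to_subspace_exists by blast
  define W where "W = {x::real^'n. \<forall>b\<in>B. b \<bullet> x = 0}"
  define K where "K = W \<inter> sphere 0 1"
  have Wsc: "c *\<^sub>R x \<in> W" if "x \<in> W" for x c using that by (auto simp: W_def)
  have closedW: "closed W"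
  proof -
    have "W = (\<Inter>b\<in>B. {x. b \<bullet> x = 0})" by (auto simp: W_def)
    then show ?thesis by (auto intro!: closed_INT closed_hyperplane)
  qed
  have "compact K" unfolding K_def Int_commute[of W]
    by (intro compact_Int_closed closedW compact_sphere) 
  moreover have "z /\<^sub>R norm z \<in> K"
    using z by (auto simp: K_def W_def orthogonal_def span_base inner_commute)
  then have "K \<noteq> {}" by auto
  moreover have "continuous_on K (\<lambda>x. x \<bullet> (S *v x))"
    by (intro continuous_intros linear_continuous_on matrix_vector_mul_bounded_linear)
  ultimately obtain x where x: "x \<in> K" and xmax: "\<And>y. y \<in> K \<Longrightarrow> y \<bullet> (S *v y) \<le> x \<bullet> (S *v x)"
    using continuous_attains_sup by metis
  define m where "m = x \<bullet> (S *v x)"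
  have xW: "x \<in> W" and nx: "x \<bullet> x = 1" using x by (auto simp: K_def norm_eq_1)
  have bnd: "w \<bullet> (S *v w) \<le> m * (w \<bullet> w)" if "w \<in> W" for w
  proof (cases "w = 0")
    case True then show ?thesis by simp
  next
    case False
    define u where "u = w /\<^sub>R norm w"
    have "u \<in> K" using False that Wsc by (auto simp: K_def u_def)
    then have "u \<bullet> (S *v u) \<le> m" using xmax m_def by auto
    moreover have "u \<bullet> (S *v u) = (w \<bullet> (S *v w)) / (norm w)^2"
      by (simp add: u_def matrix_vector_mult_scaleR power2_eq_square field_simps)
    ultimately show ?thesis using False by (simp add: divide_le_eq dot_square_norm power2_eq_square)
  qed
  define y where "y = S *v x - m *\<^sub>R x"
  have yW: "y \<in> W" unfolding W_def mem_Collect_eq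
  proof (intro ballI)
    fix b assume "b \<in> B"
    then obtain \<mu> where "S *v b = \<mu> *\<^sub>R b" using B(3) by auto
    moreover have "b \<bullet> x = 0" using xW \<open>b \<in> B\<close> by (auto simp: W_def)
    ultimately show "b \<bullet> y = 0" using sym_inner[OF sym, of b x]
      by (simp add: y_def inner_diff_right)
  qed
  have yx: "y \<bullet> x = 0" by (simp add: y_def inner_diff_left m_def[symmetric] nx) (simp add: m_def inner_commute)
  have ySx: "y \<bullet> (S *v x) = y \<bullet> y"
    by (simp add: y_def inner_diff_right inner_diff_left) (simp add: nx m_def inner_commute)
  have key: "2 * t * (y \<bullet> y) + t^2 * (y \<bullet> (S *v y)) \<le> m * t^2 * (y \<bullet> y)" for t
  proof -
    have "(x + t *\<^sub>R y) \<in> W" using xW yW Wsc by (auto simp: W_def inner_add_right)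
    from bnd[OF this] have "(x + t *\<^sub>R y) \<bullet> (S *v (x + t *\<^sub>R y)) \<le> m * ((x + t *\<^sub>R y) \<bullet> (x + t *\<^sub>R y))" .
    moreover have "x \<bullet> (S *v y) = y \<bullet> y"
      using sym_inner[OF sym, of x y] ySx by (simp add: inner_commute)
    ultimately show ?thesis
      by (simp add: matrix_vector_right_distrib matrix_vector_mult_scaleR inner_add_left inner_add_right
          m_def[symmetric] nx yx inner_commute[of x y] ySx power2_eq_square algebra_simps)
  qed
  have "y \<bullet> y = 0"
  proof -
    define c where "c = m * (y \<bullet> y) - y \<bullet> (S *v y)"
    have kc: "2 * t * (y \<bullet> y) \<le> t^2 * c" for t using key[of t] by (simp add: c_def algebra_simps)
    show ?thesis
    proof (cases "c \<le> 0")
      case True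
      have "2 * (y \<bullet> y) \<le> c" using kc[of 1] by simp
      moreover have "0 \<le> y \<bullet> y" by (rule inner_ge_zero)
      ultimately show ?thesis using True by linarith
    next
      case False
      have "2 * (y \<bullet> y / c) * (y \<bullet> y) \<le> (y \<bullet> y / c)^2 * c" using kc .
      then have "2 * (y \<bullet> y)^2 / c \<le> (y \<bullet> y)^2 / c" using False by (simp add: power2_eq_square field_simps)
      then have "(y \<bullet> y)^2 \<le> 0" using False by (simp add: divide_le_cancel)
      then show ?thesis by simp
    qed
  qed
  then have Sx: "S *v x = m *\<^sub>R x" by (simp add: y_def)
  have xnB: "x \<notin> B" using xW nx by (auto simp: W_def)
  show ?case
  proof (intro exI[of _ "insert x B"] conjI)
    show "finite (insert x B)" using B by simp
    show "card (insert x B) = Suc k" using B xnB by simp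
    show "\<forall>b\<in>insert x B. norm b = 1 \<and> (\<exists>\<mu>. S *v b = \<mu> *\<^sub>R b)"
      using B(3) Sx nx by (auto simp: norm_eq_1)
    show "pairwise orthogonal (insert x B)"
      using B(4) xW by (auto simp: pairwise_insert W_def orthogonal_def inner_commute)
  qed
qed



definition diagm :: "real^'n \<Rightarrow> real^'n^'n" where
  "diagm v = (\<chi> i j. if i = j then v$i else 0)"

lemma spectral:
  fixes S :: "real^'n^'n"
  assumes sym: "transpose S = S"
  shows "\<exists>Q d. orthogonal_matrix Q \<and> S = Q ** diagm d ** transpose Q"
proof -
  obtain B where B: "finite B" "card B = CARD('n)" "\<forall>b\<in>B. norm b = 1 \<and> (\<exists>\<mu>. S *v b = \<mu> *\<^sub>R b)" "pairwise orthogonal B"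
    using eig_set[OF sym, of "CARD('n)"] by auto
  obtain f where f: "bij_betw f (UNIV::'n set) B"
    using B by (metis finite_class.finite_UNIV finite_same_card_bij)
  have fB: "f i \<in> B" for i using f by (auto simp: bij_betw_def)
  have [simp]: "norm (f i) = 1" for i using B(3) fB by auto
  have [simp]: "i \<noteq> j \<Longrightarrow> orthogonal (f i) (f j)" for i j
    using B(4) f by (auto simp: pairwise_def bij_betw_def inj_on_def)
  define Q where "Q = (\<chi> i j. f j $ i)"
  have oQ: "orthogonal_matrix Q"
    by (simp add: Q_def orthogonal_matrix_orthonormal_columns column_def)
  define d where "d = (\<chi> j. SOME \<mu>. S *v f j = \<mu> *\<^sub>R f j)"
  have Sf: "S *v f j = (d$j) *\<^sub>R f j" for j
    unfolding d_def using B(3) fB[of j] by (simp) (rule someI_ex, auto)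
  have SQ: "S ** Q = Q ** diagm d"
  proof -
    have "(S ** Q)$i$j = (Q ** diagm d)$i$j" for i j
    proof -
      have "(S ** Q)$i$j = (S *v f j)$i"
        by (simp add: matrix_matrix_mult_def matrix_vector_mult_def Q_def)
      also have "\<dots> = f j $ i * d$j" using Sf[of j] by simp
      also have "\<dots> = (Q ** diagm d)$i$j"
        by (simp add: matrix_matrix_mult_def diagm_def Q_def if_distrib if_distribR cong: if_cong)
      finally show ?thesis .
    qed
    then show ?thesis by (simp add: vec_eq_iff)
  qed
  have "S = S ** (Q ** transpose Q)" using oQ by (simp add: orthogonal_matrix_def)
  also have "\<dots> = Q ** diagm d ** transpose Q" by (simp add: matrix_mul_assoc SQ)
  finally show ?thesis using oQ by blast
qed

lemma matrix_add_rdistrib': "(A + B) ** C = A ** C + B ** C"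
  by (vector matrix_matrix_mult_def sum.distrib[symmetric] field_simps)

lemma matrix_diff_rdistrib': "(A - B) ** (C::real^'n^'m) = A ** C - B ** C"
  by (vector matrix_matrix_mult_def sum_subtractf[symmetric] field_simps)

lemma matrix_diff_ldistrib': "(C::real^'n^'m) ** (A - B) = C ** A - C ** B"
  by (vector matrix_matrix_mult_def sum_subtractf[symmetric] field_simps)

lemma scale_right: "c *\<^sub>R (A ** B) = A ** (c *\<^sub>R (B::real^'n^'m))"
  by (vector matrix_matrix_mult_def sum_distrib_left mult_ac)

lemma transpose_diagm: "transpose (diagm a) = diagm a"
  by (simp add: vec_eq_iff diagm_def transpose_def)

definition fm :: "real^'n^'n \<Rightarrow> real^'n \<Rightarrow> (real \<Rightarrow> real) \<Rightarrow> real^'n^'n" where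
  "fm Q d g = Q ** diagm (\<chi> i. g (d$i)) ** transpose Q"

lemma diagm_mul_entry: "(diagm a ** diagm b)$i$j = (if i = j then a$i * b$i else 0)"
proof -
  have e: "\<And>k. (if i = k then a$i else 0) * (if k = j then b$k else 0) = (if k = i then (if i = j then a$i * b$i else 0) else 0)"
    by auto
  show ?thesis unfolding matrix_matrix_mult_def diagm_def vec_lambda_beta e
    by (simp only: sum.delta[OF finite] UNIV_I if_True)
qed

lemma diagm_mul: "diagm a ** diagm b = diagm (\<chi> i. a$i * b$i)"
  by (simp add: vec_eq_iff diagm_mul_entry) (simp add: diagm_def)

lemma diagm_one: "diagm (\<chi> i. 1) = mat 1"
  by (simp add: vec_eq_iff diagm_def mat_def)

lemma diagm_add: "diagm a + diagm b = diagm (a + b)"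
  by (simp add: vec_eq_iff diagm_def)

lemma diagm_scale: "c *\<^sub>R diagm a = diagm (c *\<^sub>R a)"
  by (simp add: vec_eq_iff diagm_def)

lemma diagm_zero: "diagm 0 = 0"
  by (simp add: vec_eq_iff diagm_def)

lemma diagm_axis: "diagm a *v axis i 1 = a$i *\<^sub>R axis i 1"
proof -
  have "(diagm a *v axis i 1)$j = (a$i *\<^sub>R axis i 1)$j" for j
  proof -
    have e: "\<And>k. (if j = k then a$j else 0) * (axis i 1)$k = (if k = j then (if j = i then a$i else 0) else 0)"
      by (auto simp: axis_def)
    have "(diagm a *v axis i 1)$j = (if j = i then a$i else 0)"
      unfolding matrix_vector_mult_def diagm_def vec_lambda_beta e
      by (simp only: sum.delta[OF finite] UNIV_I if_True)
    then show ?thesis by (simp add: axis_def)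
  qed
  then show ?thesis by (simp add: vec_eq_iff)
qed

lemma fm_mul:
  assumes "orthogonal_matrix Q"
  shows "fm Q d g ** fm Q d h = fm Q d (\<lambda>x. g x * h x)"
proof -
  have "fm Q d g ** fm Q d h = Q ** diagm (\<chi> i. g (d$i)) ** (transpose Q ** Q) ** diagm (\<chi> i. h (d$i)) ** transpose Q"
    by (simp add: fm_def matrix_mul_assoc)
  also have "\<dots> = Q ** (diagm (\<chi> i. g (d$i)) ** diagm (\<chi> i. h (d$i))) ** transpose Q"
    using assms by (simp add: orthogonal_matrix_def matrix_mul_assoc)
  finally show ?thesis by (simp add: diagm_mul fm_def)
qed

lemma fm_add: "fm Q d g + fm Q d h = fm Q d (\<lambda>x. g x + h x)"
proof -
  have "fm Q d g + fm Q d h = Q ** (diagm (\<chi> i. g (d$i)) + diagm (\<chi> i. h (d$i))) ** transpose Q"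
    by (simp add: fm_def matrix_add_ldistrib matrix_add_rdistrib')
  moreover have "(\<chi> i. g (d$i)) + (\<chi> i. h (d$i)) = (\<chi> i. g (d$i) + h (d$i))"
    by (simp add: vec_eq_iff)
  ultimately show ?thesis by (simp add: diagm_add fm_def)
qed

lemma fm_scale: "c *\<^sub>R fm Q d g = fm Q d (\<lambda>x. c * g x)"
proof -
  have "c *\<^sub>R fm Q d g = Q ** (c *\<^sub>R diagm (\<chi> i. g (d$i))) ** transpose Q"
    unfolding fm_def by (metis scalar_matrix_assoc scale_right)
  moreover have "c *\<^sub>R (\<chi> i. g (d$i)) = (\<chi> i. c * g (d$i))"
    by (simp add: vec_eq_iff)
  ultimately show ?thesis by (simp add: diagm_scale fm_def)
qed

lemma fm_cong: "(\<And>i. g (d$i) = h (d$i)) \<Longrightarrow> fm Q d g = fm Q d h"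
  by (simp add: fm_def)

lemma transpose_diff: "transpose (A - B) = transpose A - transpose (B::real^'n^'m)"
  by (simp add: vec_eq_iff transpose_def)

lemma fm_one:
  assumes "orthogonal_matrix Q"
  shows "fm Q d (\<lambda>x. 1) = mat 1"
  using assms by (simp add: fm_def diagm_one orthogonal_matrix_def)

lemma fm_id: "Q ** diagm d ** transpose Q = fm Q d (\<lambda>x. x)"
  by (simp add: fm_def)

lemma det_fm:
  assumes "orthogonal_matrix Q"
  shows "det (fm Q d g) = (\<Prod>i\<in>UNIV. g (d$i))"
proof -
  have "det Q * det Q = 1"
    using assms det_orthogonal_matrix[OF assms] by auto
  moreover have "det (diagm (\<chi> i. g (d$i))) = (\<Prod>i\<in>UNIV. g (d$i))"
    by (subst det_diagonal) (auto simp: diagm_def)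
  ultimately show ?thesis by (simp add: fm_def det_mul)
qed

lemma trace_fm:
  assumes "orthogonal_matrix Q"
  shows "trace (fm Q d g) = (\<Sum>i\<in>UNIV. g (d$i))"
proof -
  have "trace (fm Q d g) = trace (diagm (\<chi> i. g (d$i)) ** (transpose Q ** Q))"
    unfolding fm_def by (metis trace_mul_sym matrix_mul_assoc)
  also have "\<dots> = (\<Sum>i\<in>UNIV. g (d$i))"
    using assms by (simp add: orthogonal_matrix_def trace_def diagm_def)
  finally show ?thesis .
qed

lemma matrix_inv_eq:
  fixes A B :: "real^'n^'n"
  assumes "A ** B = mat 1" "B ** A = mat 1"
  shows "matrix_inv A = B"
proof -
  have "A ** matrix_inv A = mat 1 \<and> matrix_inv A ** A = mat 1"
    unfolding matrix_inv_def by (rule someI[of _ B]) (use assms in auto)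
  then have "matrix_inv A = matrix_inv A ** (A ** B)" using assms by simp
  also have "\<dots> = B" using \<open>_ \<and> _\<close> by (simp add: matrix_mul_assoc)
  finally show ?thesis .
qed

lemma inv_fm:
  assumes "orthogonal_matrix Q" "\<And>i. g (d$i) \<noteq> 0"
  shows "matrix_inv (fm Q d g) = fm Q d (\<lambda>x. 1 / g x)"
proof -
  have "fm Q d (\<lambda>x. g x * (1 / g x)) = fm Q d (\<lambda>x. 1)"
    using assms(2) by (simp add: fm_def)
  moreover have "fm Q d (\<lambda>x. (1 / g x) * g x) = fm Q d (\<lambda>x. 1)"
    using assms(2) by (simp add: fm_def)
  ultimately show ?thesis
    by (intro matrix_inv_eq) (simp_all add: fm_mul[OF assms(1)] fm_one[OF assms(1)])
qed

lemma quad_conj: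
  fixes A D :: "real^'n^'n"
  shows "x \<bullet> ((A ** D ** transpose A) *v x) = (transpose A *v x) \<bullet> (D *v (transpose A *v x))"
proof -
  have "(A ** D ** transpose A) *v x = A *v (D *v (transpose A *v x))"
    by (simp only: matrix_vector_mul_assoc matrix_mul_assoc)
  then have "x \<bullet> ((A ** D ** transpose A) *v x) = (x v* A) \<bullet> (D *v (transpose A *v x))"
    by (simp only: dot_lmul_matrix)
  then show ?thesis by (simp only: transpose_matrix_vector)
qed

lemma quad_diagm: "y \<bullet> (diagm a *v y) = (\<Sum>i\<in>UNIV. a$i * (y$i)^2)"
  by (simp add: inner_vec_def diagm_def matrix_vector_mult_def if_distrib if_distribR power2_eq_square
      mult.commute mult.left_commute cong: if_cong)

lemma sym_fm: "transpose (fm Q d g) = fm Q d g"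
  by (simp add: fm_def matrix_transpose_mul matrix_mul_assoc transpose_diagm)

lemma pd_fm:
  fixes Q :: "real^'n^'n"
  assumes "orthogonal_matrix Q" "\<And>i. g (d$i) > 0"
  shows "pd_mat (fm Q d g)"
  unfolding pd_mat_def symmetric_mat_def
proof (intro conjI allI impI sym_fm)
  fix x :: "real^'n" assume "x \<noteq> 0"
  define y where "y = transpose Q *v x"
  have "Q *v y = x" using assms(1)
    by (simp add: y_def matrix_vector_mul_assoc orthogonal_matrix_def del: transpose_matrix_vector)
  then have "y \<noteq> 0" using \<open>x \<noteq> 0\<close> by auto
  then obtain i where i: "y$i \<noteq> 0" by (auto simp: vec_eq_iff)
  have "0 < g (d$i) * (y$i)^2" using assms(2)[of i] i by simp
  also have "\<dots> \<le> (\<Sum>j\<in>UNIV. g (d$j) * (y$j)^2)"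
    by (rule member_le_sum) (auto intro!: mult_nonneg_nonneg simp: assms(2) less_imp_le)
  also have "\<dots> = x \<bullet> (fm Q d g *v x)"
    by (simp add: fm_def quad_conj quad_diagm y_def del: transpose_matrix_vector)
  finally show "0 < x \<bullet> (fm Q d g *v x)" .
qed



lemma sqrt_unique:
  fixes R1 R2 :: "real^'n^'n"
  assumes p1: "pd_mat R1" and p2: "pd_mat R2" and eq: "R1 ** R1 = R2 ** R2"
  shows "R1 = R2"
proof -
  define D where "D = R1 - R2"
  have s1: "transpose R1 = R1" and s2: "transpose R2 = R2"
    using p1 p2 by (auto simp: pd_mat_def symmetric_mat_def)
  have sD: "transpose D = D" by (simp add: D_def transpose_diff s1 s2)
  obtain P \<mu> where oP: "orthogonal_matrix P" and DP: "D = P ** diagm \<mu> ** transpose P"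
    using spectral[OF sD] by blast
  have decomp: "R1 ** D + D ** R2 = 0"
    using eq by (simp add: D_def matrix_diff_ldistrib' matrix_diff_rdistrib')
  have "\<mu>$i = 0" for i
  proof -
    define e :: "real^'n" where "e = axis i 1"
    define x where "x = P *v e"
    have Ptx: "transpose P *v x = e"
      using oP by (simp only: x_def matrix_vector_mul_assoc orthogonal_matrix_def matrix_vector_mul_lid)
    have "e \<noteq> 0" by (simp add: e_def)
    then have xnz: "x \<noteq> 0" using Ptx by auto
    have Dx: "D *v x = \<mu>$i *\<^sub>R x"
    proof -
      have "D *v x = P *v (diagm \<mu> *v (transpose P *v x))"
        by (simp only: DP matrix_vector_mul_assoc matrix_mul_assoc)
      also have "\<dots> = P *v (diagm \<mu> *v e)" by (simp only: Ptx)
      also have "\<dots> = \<mu>$i *\<^sub>R x"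
        by (simp only: e_def diagm_axis matrix_vector_mult_scaleR x_def)
      finally show ?thesis .
    qed
    have "R1 *v (D *v x) + D *v (R2 *v x) = (R1 ** D + D ** R2) *v x"
      by (simp only: matrix_vector_mul_assoc matrix_vector_mult_add_rdistrib)
    then have z: "R1 *v (D *v x) + D *v (R2 *v x) = 0" by (simp only: decomp matrix_vector_mult_0)
    have "0 = x \<bullet> (R1 *v (D *v x) + D *v (R2 *v x))" by (simp only: z inner_zero_right)
    also have "\<dots> = x \<bullet> (R1 *v (D *v x)) + x \<bullet> (D *v (R2 *v x))" by (rule inner_add_right)
    also have "x \<bullet> (D *v (R2 *v x)) = (D *v x) \<bullet> (R2 *v x)"
      by (rule sym_inner[OF sD])
    also have "x \<bullet> (R1 *v (D *v x)) + (D *v x) \<bullet> (R2 *v x)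
        = \<mu>$i * (x \<bullet> (R1 *v x) + x \<bullet> (R2 *v x))"
      by (simp only: Dx matrix_vector_mult_scaleR inner_scaleR_right inner_scaleR_left distrib_left)
    finally have "\<mu>$i * (x \<bullet> (R1 *v x) + x \<bullet> (R2 *v x)) = 0" by simp
    moreover have "x \<bullet> (R1 *v x) + x \<bullet> (R2 *v x) > 0"
      using p1 p2 xnz by (auto simp: pd_mat_def intro: add_pos_pos)
    ultimately show ?thesis by simp
  qed
  then have "\<mu> = 0" by (simp add: vec_eq_iff)
  then have "D = 0" by (simp add: DP diagm_zero)
  then show ?thesis by (simp add: D_def)
qed

lemma term_ineq:
  fixes d l :: real
  assumes d: "d \<ge> 0" and l: "l > 0"
  shows "ln (1 / (d + l)) - d * (1 / (d + l))
       \<le> ln (1 / (sqrt (l^2 + d^2/4) + d/2)) - d * (1 / (sqrt (l^2 + d^2/4) + d/2))"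
proof -
  define a where "a = d + l"
  define r where "r = sqrt (l^2 + d^2/4) + d/2"
  have "d/2 \<le> sqrt (l^2 + d^2/4)" by (rule real_le_rsqrt) (simp add: power_divide)
  then have rd: "d \<le> r" by (simp add: r_def)
  have "sqrt (l^2 + d^2/4) \<le> l + d/2"
    by (rule real_le_lsqrt) (use d l in \<open>auto simp: power2_eq_square algebra_simps\<close>)
  then have ra: "r \<le> a" by (simp add: r_def a_def)
  have "0 < l^2 + d^2/4" using l by (simp add: add_pos_nonneg)
  then have "0 < sqrt (l^2 + d^2/4)" by simp
  then have rpos: "r > 0" using d unfolding r_def by linarith
  have apos: "a > 0" using d l by (simp add: a_def)
  have "ln (r / a) \<le> r / a - 1" by (rule ln_le_minus_one) (use rpos apos in simp)
  then have L: "ln r - ln a \<le> (r - a) / a" using rpos apos by (simp add: ln_div diff_divide_distrib)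
  have "d * (a - r) \<le> r * (a - r)" using rd ra by (intro mult_right_mono) auto
  then have "d / r - d / a \<le> (a - r) / a"
  proof -
    assume h: "d * (a - r) \<le> r * (a - r)"
    have "d / r - d / a = d * (a - r) / (r * a)" using rpos apos by (simp add: field_simps)
    also have "\<dots> \<le> r * (a - r) / (r * a)" by (rule divide_right_mono[OF h]) (use rpos apos in simp)
    also have "\<dots> = (a - r) / a" using rpos by simp
    finally show ?thesis .
  qed
  moreover have "(r - a) / a = - ((a - r) / a)" using apos by (simp add: field_simps)
  ultimately have "ln (1/a) - d * (1/a) \<le> ln (1/r) - d * (1/r)"
  proof -
    assume h1: "d / r - d / a \<le> (a - r) / a" and h2: "(r - a) / a = - ((a - r) / a)"
    have e1: "ln (1/a) = - ln a" using apos by (simp add: ln_div)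
    have e2: "ln (1/r) = - ln r" using rpos by (simp add: ln_div)
    have e3: "d * (1/a) = d / a" "d * (1/r) = d / r" by simp_all
    show ?thesis unfolding e1 e2 e3 using h1 h2 L by linarith
  qed
  then show ?thesis by (simp add: a_def r_def)
qed

theorem corollary2:
  fixes S :: "real^'p^'p" and lam_II lam_a :: real
  assumes "psd_mat S"
    and "lam_II > 0"
    and "lam_a = lam_II ^ 2"
  shows "loglik (matrix_inv (S + lam_II *\<^sub>R mat 1)) S
         \<le> loglik (matrix_inv (mat_sqrt (lam_a *\<^sub>R mat 1 + (1/4) *\<^sub>R (S ** S))
                                + (1/2) *\<^sub>R S)) S"
proof -
  define l where "l = lam_II"
  have l: "l > 0" using assms(2) by (simp add: l_def)
  have sS: "transpose S = S" using assms(1) by (simp add: psd_mat_def symmetric_mat_def)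
  obtain Q d where oQ: "orthogonal_matrix Q" and SQ: "S = Q ** diagm d ** transpose Q"
    using spectral[OF sS] by blast
  have Sfm: "S = fm Q d (\<lambda>x. x)" using SQ by (simp add: fm_id)
  have one: "mat 1 = fm Q d (\<lambda>x. 1)" using fm_one[OF oQ] by simp
  have dnn: "d$i \<ge> 0" for i
  proof -
    define e :: "real^'p" where "e = axis i 1"
    have "transpose Q *v (Q *v e) = e"
      using oQ by (simp only: matrix_vector_mul_assoc orthogonal_matrix_def matrix_vector_mul_lid)
    then have "(Q *v e) \<bullet> (S *v (Q *v e)) = e \<bullet> (diagm d *v e)"
      by (simp only: SQ quad_conj)
    also have "\<dots> = d$i" by (simp add: e_def diagm_axis)
    finally show ?thesis using assms(1) by (metis psd_mat_def)
  qed
  have A: "S + lam_II *\<^sub>R mat 1 = fm Q d (\<lambda>x. x + l)"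
    by (simp only: Sfm one fm_scale fm_add l_def) (rule fm_cong, simp)
  have iA: "matrix_inv (S + lam_II *\<^sub>R mat 1) = fm Q d (\<lambda>x. 1 / (x + l))"
    unfolding A by (rule inv_fm[OF oQ]) (use dnn l in \<open>smt (verit)\<close>)
  define R0 where "R0 = fm Q d (\<lambda>x. sqrt (l^2 + x^2/4))"
  have M: "lam_a *\<^sub>R mat 1 + (1/4) *\<^sub>R (S ** S) = fm Q d (\<lambda>x. l^2 + x^2/4)"
    by (simp only: Sfm one fm_scale fm_add fm_mul[OF oQ] assms(3) l_def[symmetric])
      (rule fm_cong, simp add: power2_eq_square)
  have pdR0: "pd_mat R0" unfolding R0_def
    by (rule pd_fm[OF oQ]) (use l in \<open>simp add: add_pos_nonneg\<close>)
  have R0sq: "R0 ** R0 = fm Q d (\<lambda>x. l^2 + x^2/4)"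
    unfolding R0_def fm_mul[OF oQ]
    by (rule fm_cong) (simp add: add_nonneg_nonneg)
  have sq: "mat_sqrt (lam_a *\<^sub>R mat 1 + (1/4) *\<^sub>R (S ** S)) = R0"
    unfolding mat_sqrt_def M
  proof (rule the_equality)
    show "pd_mat R0 \<and> R0 ** R0 = fm Q d (\<lambda>x. l^2 + x^2/4)" using pdR0 R0sq by simp
    fix R assume "pd_mat R \<and> R ** R = fm Q d (\<lambda>x. l^2 + x^2/4)"
    then show "R = R0" using sqrt_unique[of R R0] pdR0 R0sq by simp
  qed
  define r where "r = (\<lambda>x::real. sqrt (l^2 + x^2/4) + x/2)"
  have rpos: "r (d$i) > 0" for i
  proof -
    have "0 < l^2 + (d$i)^2/4" using l by (simp add: add_pos_nonneg)
    then have "0 < sqrt (l^2 + (d$i)^2/4)" by simp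
    then show ?thesis using dnn[of i] unfolding r_def by linarith
  qed
  have B: "mat_sqrt (lam_a *\<^sub>R mat 1 + (1/4) *\<^sub>R (S ** S)) + (1/2) *\<^sub>R S = fm Q d r"
    unfolding sq R0_def by (simp only: Sfm fm_scale fm_add) (rule fm_cong, simp add: r_def)
  have iB: "matrix_inv (mat_sqrt (lam_a *\<^sub>R mat 1 + (1/4) *\<^sub>R (S ** S)) + (1/2) *\<^sub>R S)
      = fm Q d (\<lambda>x. 1 / r x)"
    unfolding B by (rule inv_fm[OF oQ]) (use rpos in \<open>smt (verit)\<close>)
  have LL: "loglik (fm Q d h) S = (\<Sum>i\<in>UNIV. ln (h (d$i)) - d$i * h (d$i))"
    if hnz: "\<And>i. h (d$i) \<noteq> 0" for h
  proof -
    have "S ** fm Q d h = fm Q d (\<lambda>x. x * h x)" by (simp only: Sfm fm_mul[OF oQ])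
    then show ?thesis
      by (simp add: loglik_def det_fm[OF oQ] trace_fm[OF oQ] ln_prod[OF finite] hnz sum_subtractf)
  qed
  have nz1: "1 / (d$i + l) \<noteq> 0" for i using dnn[of i] l by simp
  have L1: "loglik (fm Q d (\<lambda>x. 1 / (x + l))) S = (\<Sum>i\<in>UNIV. ln (1 / (d$i + l)) - d$i * (1 / (d$i + l)))"
    using LL[of "\<lambda>x. 1 / (x + l)"] nz1 by simp
  have nz2: "1 / r (d$i) \<noteq> 0" for i using rpos[of i] by simp
  have L2: "loglik (fm Q d (\<lambda>x. 1 / r x)) S = (\<Sum>i\<in>UNIV. ln (1 / r (d$i)) - d$i * (1 / r (d$i)))"
    using LL[of "\<lambda>x. 1 / r x"] nz2 by simp
  have "(\<Sum>i\<in>UNIV. ln (1 / (d$i + l)) - d$i * (1 / (d$i + l)))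
      \<le> (\<Sum>i\<in>UNIV. ln (1 / r (d$i)) - d$i * (1 / r (d$i)))"
    by (rule sum_mono) (use term_ineq[OF dnn l] in \<open>simp add: r_def\<close>)
  then show ?thesis unfolding iA iB L1 L2 .
qed


end
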